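(* Let $p$ be a binary word with exactly one run. If $p=0$ or $p=1$, then $p$ has no internal zero at any $n\ge0$. If $p$ has length $l\ge2$, then $p$ has an internal zero at every $n\ge l+1$.
   Context: $c_p(w)$ is the number of occurrences of $p$ as a (not necessarily consecutive) subsequence of $w$; $B_{n,p}(k)$ is the number of binary words of length $n$ with $c_p(w)=k$. $p$ has an internal zero at $n$ if there exist $0\le k_1<k_2<k_3$ with $B_{n,p}(k_1)\ne0$, $B_{n,p}(k_2)=0$, $B_{n,p}(k_3)\ne0$. *)

theory Defs
  imports Main
begin

text \<open>Binary words are lists of booleans (False = 0, True = 1).\<close>

definition occ :: "bool list \<Rightarrow> bool list \<Rightarrow> nat" where
  "occ p w = card {I. I \<subseteq> {0..<length w} \<and> card I = length p \<and> nths w I = p}"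

definition B :: "nat \<Rightarrow> bool list \<Rightarrow> nat \<Rightarrow> nat" where
  "B n p k = card {w :: bool list. length w = n \<and> occ p w = k}"

definition internal_zero :: "bool list \<Rightarrow> nat \<Rightarrow> bool" where
  "internal_zero p n \<longleftrightarrow>
     (\<exists>k1 k2 k3. k1 < k2 \<and> k2 < k3 \<and> B n p k1 \<noteq> 0 \<and> B n p k2 = 0 \<and> B n p k3 \<noteq> 0)"

definition one_run :: "bool list \<Rightarrow> bool" where
  "one_run p \<longleftrightarrow> p \<noteq> [] \<and> (\<forall>i < length p. p ! i = p ! 0)"

end

theory Submission
  imports Defs
begin

definition cnt :: "bool \<Rightarrow> bool list \<Rightarrow> nat" where
  "cnt c w = card {i. i < length w \<and> w ! i = c}"

lemma cnt_le: "cnt c w \<le> length w"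
proof -
  have "{i. i < length w \<and> w ! i = c} \<subseteq> {0..<length w}" by auto
  then show ?thesis unfolding cnt_def by (metis card_atLeastLessThan card_mono diff_zero finite_atLeastLessThan)
qed

lemma rep_aux: "i < a + b \<Longrightarrow> \<not> i < a \<Longrightarrow> replicate b x ! (i - a) = x"
  by (subst nth_replicate) auto

lemma cnt_rep: "cnt c (replicate a c @ replicate b (\<not>c)) = a"
proof -
  have "{i. i < length (replicate a c @ replicate b (\<not>c)) \<and> (replicate a c @ replicate b (\<not>c)) ! i = c} = {0..<a}"
  proof (intro set_eqI)
    fix i
    show "(i \<in> {i. i < length (replicate a c @ replicate b (\<not>c)) \<and> (replicate a c @ replicate b (\<not>c)) ! i = c}) = (i \<in> {0..<a})"
    proof (cases "i < a")
      case True then show ?thesis by (simp add: nth_append)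
    next
      case False
      have "i < a + b \<Longrightarrow> (replicate a c @ replicate b (\<not>c)) ! i = (\<not>c)"
        using False rep_aux[of i a b "\<not>c"] by (simp only: nth_append length_replicate if_False) blast
      then show ?thesis using False by auto
    qed
  qed
  then show ?thesis unfolding cnt_def by simp
qed

lemma occ_rep: "occ (replicate l c) w = cnt c w choose l"
proof -
  let ?S = "{i. i < length w \<and> w ! i = c}"
  have eq: "{I. I \<subseteq> {0..<length w} \<and> card I = length (replicate l c) \<and> nths w I = replicate l c}
      = {I. I \<subseteq> ?S \<and> card I = l}"
  proof (intro set_eqI iffI)
    fix I assume "I \<in> {I. I \<subseteq> {0..<length w} \<and> card I = length (replicate l c) \<and> nths w I = replicate l c}"
    hence A: "I \<subseteq> {0..<length w}" "card I = l" "nths w I = replicate l c" by auto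
    have "I \<subseteq> ?S"
    proof
      fix i assume "i \<in> I"
      with A(1) have "i < length w" by auto
      hence "w ! i \<in> set (nths w I)" using \<open>i \<in> I\<close> by (auto simp: set_nths)
      with A(3) have "w ! i = c" by simp
      with \<open>i < length w\<close> show "i \<in> ?S" by simp
    qed
    with A show "I \<in> {I. I \<subseteq> ?S \<and> card I = l}" by simp
  next
    fix I assume "I \<in> {I. I \<subseteq> ?S \<and> card I = l}"
    hence A: "I \<subseteq> ?S" "card I = l" by auto
    have sub: "I \<subseteq> {0..<length w}" using A(1) by auto
    have "{i. i < length w \<and> i \<in> I} = I" using sub by auto
    hence len: "length (nths w I) = l" using A(2) by (simp add: length_nths)
    have "nths w I = replicate l c"
      by (rule replicate_eqI[OF len]) (use A(1) in \<open>auto simp: set_nths\<close>)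
    with sub A(2) show "I \<in> {I. I \<subseteq> {0..<length w} \<and> card I = length (replicate l c) \<and> nths w I = replicate l c}" by simp
  qed
  show ?thesis unfolding occ_def eq cnt_def by (rule n_subsets) simp
qed

lemma finite_words: "finite {w :: bool list. length w = n \<and> P w}"
  by (rule finite_subset[OF _ finite_lists_length_eq[of "UNIV :: bool set" n]]) auto

lemma B_nonzero:
  assumes "length w = n" "occ p w = k" shows "B n p k \<noteq> 0"
proof -
  have "w \<in> {w :: bool list. length w = n \<and> occ p w = k}" using assms by simp
  then show ?thesis unfolding B_def using finite_words[of n "\<lambda>w. occ p w = k"]
    by (metis card_0_eq empty_iff)
qed

lemma B_zero:
  assumes "\<And>w. length w = n \<Longrightarrow> occ p w \<noteq> k" shows "B n p k = 0"
proof -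
  have "{w :: bool list. length w = n \<and> occ p w = k} = {}" using assms by auto
  then show ?thesis unfolding B_def by (metis card.empty)
qed

lemma choose_big: assumes "l + 1 \<le> m" shows "l + 1 \<le> m choose l"
proof -
  have "(l+1) choose l \<le> m choose l" by (rule binomial_right_mono[OF assms])
  moreover have "(l+1) choose l = l + 1" by (simp add: binomial_Suc_n)
  ultimately show ?thesis by simp
qed

theorem mainTheorem13:
  fixes p :: "bool list"
  assumes "one_run p"
  shows "(length p = 1 \<longrightarrow> (\<forall>n. \<not> internal_zero p n))
       \<and> (length p \<ge> 2 \<longrightarrow> (\<forall>n. n \<ge> length p + 1 \<longrightarrow> internal_zero p n))"
proof -
  define c where "c = p ! 0"
  define l where "l = length p"
  have all: "\<forall>i < length p. p ! i = c" using assms unfolding one_run_def c_def by blast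
  have prep: "p = replicate l c"
  proof (rule nth_equalityI)
    show "length p = length (replicate l c)" by (simp add: l_def)
    fix i assume "i < length p"
    then show "p ! i = replicate l c ! i" using all by (simp add: l_def)
  qed
  have occ: "\<And>w. occ p w = cnt c w choose l" by (subst prep, rule occ_rep)
  have part1: "l = 1 \<longrightarrow> (\<forall>n. \<not> internal_zero p n)"
  proof (intro impI allI notI)
    fix n assume l1: "l = 1" and iz: "internal_zero p n"
    then obtain k2 k3 where k: "k2 < k3" "B n p k2 = 0" "B n p k3 \<noteq> 0"
      unfolding internal_zero_def by blast
    have "k3 \<le> n"
    proof (rule ccontr)
      assume "\<not> k3 \<le> n"
      hence "B n p k3 = 0" by (intro B_zero) (use cnt_le in \<open>auto simp: occ l1\<close>)
      with k show False by simp
    qed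
    hence "k2 \<le> n" using k by simp
    hence "B n p k2 \<noteq> 0"
      by (intro B_nonzero[of "replicate k2 c @ replicate (n - k2) (\<not>c)"]) (auto simp: occ l1 cnt_rep)
    with k show False by simp
  qed
  have part2: "l \<ge> 2 \<longrightarrow> (\<forall>n. n \<ge> l + 1 \<longrightarrow> internal_zero p n)"
  proof (intro impI allI)
    fix n assume l2: "l \<ge> 2" and n: "n \<ge> l + 1"
    have b0: "B n p 0 \<noteq> 0"
      by (rule B_nonzero[of "replicate 0 c @ replicate n (\<not>c)"]) (use l2 cnt_rep[of c 0 n] in \<open>auto simp: occ\<close>)
    have b3: "B n p (l+1) \<noteq> 0"
      by (rule B_nonzero[of "replicate (l+1) c @ replicate (n - (l+1)) (\<not>c)"])
        (use n cnt_rep[of c "l+1" "n-(l+1)"] in \<open>simp_all add: occ binomial_Suc_n\<close>)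
    have b2: "B n p 2 = 0"
    proof (rule B_zero)
      fix w :: "bool list"
      consider "cnt c w < l" | "cnt c w = l" | "cnt c w \<ge> l + 1" by linarith
      then show "occ p w \<noteq> 2"
      proof cases
        case 3 then show ?thesis using choose_big[OF 3] l2 by (simp add: occ)
      qed (auto simp: occ binomial_eq_0)
    qed
    show "internal_zero p n" unfolding internal_zero_def
      using b0 b2 b3 l2 by (intro exI[of _ 0] exI[of _ 2] exI[of _ "l+1"]) auto
  qed
  show ?thesis using part1 part2 unfolding l_def by blast
qed

end
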